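(* Let there be $H$ experts and $K \ge 2$ class labels. Let $x$ be drawn from a distribution $p(x)$, and for each $x$ let each expert assign a label to $x$, producing a vote profile with consensus label $y_*$ (the label receiving the most votes) and consensus set size $n_c$ (the number of experts voting for $y_*$); let $p(n_c)$ denote the induced distribution of $n_c$. Assume: (1) $p(n_c) = 0$ for every $n_c \le \lfloor H/2 \rfloor$ (i.e., the consensus is always a strict majority); (2) for every $x$, all $H - n_c$ experts not voting for $y_*$ vote for one and the same label $k \neq y_*$. Let $n_q$ be an odd integer with $1 \le n_q \le H$. For each $x$, select $n_q$ experts uniformly at random without replacement and predict $\hat y_*$ as the most frequent label among their votes. Let $Err$ be the probability, averaged over $x \sim p$ and the random selection, that $\hat y_* \ne y_*$. Then \[ Err = \sum_{n_c} p(n_c)\, Err_{n_c}, \qquad Err_{n_c} = F_{HG}\!\left(\left\lfloor \tfrac{n_q}{2} \right\rfloor; H, n_c, n_q\right), \] where $F_{HG}(r; H, n_c, n_q) = \sum_{j=0}^{r} \binom{n_c}{j}\binom{H-n_c}{n_q-j} \big/ \binom{H}{n_q}$ is the cumulative distribution function of the hypergeometric distribution for the number of consensus-set experts obtained when drawing $n_q$ experts without replacement from $H$ experts of which $n_c$ are in the consensus set.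
   Context: The consensus set for an example $x$ is the set of experts whose label equals the consensus label $y_*$; $n_c$ is its size. Binomial coefficients $\binom{a}{b}$ are taken to be $0$ when $b<0$ or $b>a$. *)

theory Defs
  imports "HOL-Probability.Probability"
begin

text \<open>Experts are 0..H-1, labels are 0..K-1. A vote profile is a function
  v :: nat => nat mapping each expert to its label.\<close>

definition votecount :: "(nat \<Rightarrow> nat) \<Rightarrow> nat set \<Rightarrow> nat \<Rightarrow> nat" where
  "votecount v S y = card {h \<in> S. v h = y}"

text \<open>A most frequent label among the votes of the experts in S
  (ties broken arbitrarily).\<close>
definition mode_label :: "nat \<Rightarrow> (nat \<Rightarrow> nat) \<Rightarrow> nat set \<Rightarrow> nat" where
  "mode_label K v S = (SOME y. y < K \<and> (\<forall>y'<K. votecount v S y' \<le> votecount v S y))"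

definition consensus_label :: "nat \<Rightarrow> nat \<Rightarrow> (nat \<Rightarrow> nat) \<Rightarrow> nat" where
  "consensus_label H K v = mode_label K v {..<H}"

definition consensus_size :: "nat \<Rightarrow> nat \<Rightarrow> (nat \<Rightarrow> nat) \<Rightarrow> nat" where
  "consensus_size H K v = votecount v {..<H} (consensus_label H K v)"

definition expert_subsets :: "nat \<Rightarrow> nat \<Rightarrow> nat set set" where
  "expert_subsets H nq = {S. S \<subseteq> {..<H} \<and> card S = nq}"

definition F_HG :: "nat \<Rightarrow> nat \<Rightarrow> nat \<Rightarrow> nat \<Rightarrow> real" where
  "F_HG r H nc nq =
     (\<Sum>j=0..r. real (nc choose j) * real ((H - nc) choose (nq - j))) / real (H choose nq)"

definition Err :: "nat \<Rightarrow> nat \<Rightarrow> nat \<Rightarrow> 'a pmf \<Rightarrow> ('a \<Rightarrow> nat \<Rightarrow> nat) \<Rightarrow> real" where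
  "Err H K nq p votes =
     measure_pmf.expectation p (\<lambda>x.
       measure_pmf.prob (pmf_of_set (expert_subsets H nq))
         {S. mode_label K (votes x) S \<noteq> consensus_label H K (votes x)})"

end

theory Submission
  imports Defs
begin

lemma card_split_subsets:
  assumes fA: "finite A" and fB: "finite B" and dis: "A \<inter> B = {}" and jm: "j \<le> m"
  shows "card {S. S \<subseteq> A \<union> B \<and> card S = m \<and> card (S \<inter> A) = j}
       = (card A choose j) * (card B choose (m - j))"
proof -
  let ?P = "{X. X \<subseteq> A \<and> card X = j}"
  let ?Q = "{Y. Y \<subseteq> B \<and> card Y = m - j}"
  let ?f = "\<lambda>(X, Y). X \<union> Y"
  have eq: "{S. S \<subseteq> A \<union> B \<and> card S = m \<and> card (S \<inter> A) = j} = ?f ` (?P \<times> ?Q)"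
  proof (intro equalityI subsetI)
    fix S assume "S \<in> {S. S \<subseteq> A \<union> B \<and> card S = m \<and> card (S \<inter> A) = j}"
    hence S: "S \<subseteq> A \<union> B" "card S = m" "card (S \<inter> A) = j" by auto
    have fS: "finite S" using S(1) fA fB finite_subset by blast
    have "S = (S \<inter> A) \<union> (S \<inter> B)" using S(1) by blast
    moreover have "card S = card (S \<inter> A) + card (S \<inter> B)"
      using card_Un_disjoint[of "S \<inter> A" "S \<inter> B"] fS dis \<open>S = (S \<inter> A) \<union> (S \<inter> B)\<close>
      by (metis Int_assoc Int_commute Int_empty_right finite_Int inf_left_commute)
    ultimately show "S \<in> ?f ` (?P \<times> ?Q)" using S
      by (intro image_eqI[of _ _ "(S \<inter> A, S \<inter> B)"]) auto
  next
    fix S assume "S \<in> ?f ` (?P \<times> ?Q)"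
    then obtain X Y where XY: "X \<subseteq> A" "card X = j" "Y \<subseteq> B" "card Y = m - j" "S = X \<union> Y" by auto
    have fX: "finite X" "finite Y" using XY fA fB finite_subset by blast+
    have "X \<inter> Y = {}" using XY dis by blast
    hence "card S = m" using XY fX jm card_Un_disjoint[of X Y] by simp
    moreover have "S \<inter> A = X" using XY dis by blast
    ultimately show "S \<in> {S. S \<subseteq> A \<union> B \<and> card S = m \<and> card (S \<inter> A) = j}" using XY by auto
  qed
  have inj: "inj_on ?f (?P \<times> ?Q)"
  proof (rule inj_onI)
    fix u w assume "u \<in> ?P \<times> ?Q" "w \<in> ?P \<times> ?Q" "?f u = ?f w"
    then obtain X Y X' Y' where "u = (X, Y)" "w = (X', Y')" "X \<subseteq> A" "Y \<subseteq> B" "X' \<subseteq> A" "Y' \<subseteq> B"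
      "X \<union> Y = X' \<union> Y'" by auto
    moreover have "X = (X \<union> Y) \<inter> A" "Y = (X \<union> Y) \<inter> B" "X' = (X' \<union> Y') \<inter> A" "Y' = (X' \<union> Y') \<inter> B"
      using calculation dis by blast+
    ultimately show "u = w" by metis
  qed
  have "card (?f ` (?P \<times> ?Q)) = card ?P * card ?Q"
    using card_image[OF inj] card_cartesian_product by metis
  also have "\<dots> = (card A choose j) * (card B choose (m - j))"
    using n_subsets[OF fA] n_subsets[OF fB] by simp
  finally show ?thesis using eq by simp
qed


lemma mode_prop:
  assumes "K > 0"
  shows "mode_label K v S < K \<and> (\<forall>y'<K. votecount v S y' \<le> votecount v S (mode_label K v S))"
proof -
  let ?f = "votecount v S"
  have ne: "?f ` {..<K} \<noteq> {}" using assms by auto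
  have "Max (?f ` {..<K}) \<in> ?f ` {..<K}" using Max_in[OF _ ne] by simp
  then obtain y where y: "y < K" "?f y = Max (?f ` {..<K})" by auto
  have "\<forall>y'<K. ?f y' \<le> ?f y" using y by (simp add: Max_ge)
  hence "\<exists>y. y < K \<and> (\<forall>y'<K. ?f y' \<le> ?f y)" using y by blast
  thus ?thesis unfolding mode_label_def by (rule someI_ex)
qed

lemma vc_disj:
  assumes "y \<noteq> z" "finite S"
  shows "votecount v S y + votecount v S z \<le> card S"
proof -
  have "votecount v S y + votecount v S z = card ({h \<in> S. v h = y} \<union> {h \<in> S. v h = z})"
    unfolding votecount_def using assms by (subst card_Un_disjoint) auto
  also have "\<dots> \<le> card S" using assms by (intro card_mono) auto
  finally show ?thesis .
qed

lemma per_S: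
  assumes K: "K > 0" and lab: "\<forall>h<H. v h < K" and ky: "k \<noteq> y"
    and two: "\<forall>h<H. v h \<noteq> y \<longrightarrow> v h = k"
    and S: "S \<subseteq> {..<H}" "card S = nq" and odd: "odd nq"
  shows "mode_label K v S \<noteq> y \<longleftrightarrow> votecount v S y \<le> nq div 2"
proof -
  have fS: "finite S" using S finite_subset by blast
  have ck: "votecount v S k = nq - votecount v S y"
  proof -
    have "{h \<in> S. v h = k} = S - {h \<in> S. v h = y}" using S two ky by auto
    thus ?thesis unfolding votecount_def using S fS by (simp add: card_Diff_subset)
  qed
  have le: "votecount v S y \<le> nq" using vc_disj[OF ky[symmetric] fS, of v] S by simp
  show ?thesis
  proof
    assume m: "mode_label K v S \<noteq> y"
    have "votecount v S y \<le> votecount v S (mode_label K v S)"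
    proof -
      show ?thesis
      proof (cases "y < K")
        case True thus ?thesis using mode_prop[OF K, of v S] by blast
      next
        case False
        hence "{h \<in> S. v h = y} = {}" using S lab by auto
        thus ?thesis unfolding votecount_def by (metis card.empty le0)
      qed
    qed
    moreover have "votecount v S y + votecount v S (mode_label K v S) \<le> nq"
      using vc_disj[OF m[symmetric] fS, of v] S by simp
    ultimately show "votecount v S y \<le> nq div 2" using odd by presburger
  next
    assume a: "votecount v S y \<le> nq div 2"
    hence gt: "votecount v S k > votecount v S y" using ck odd le by presburger
    hence "{h \<in> S. v h = k} \<noteq> {}" unfolding votecount_def by (metis card.empty not_less0)
    then obtain h where "h \<in> S" "v h = k" by blast
    hence kK: "k < K" using S lab by auto
    show "mode_label K v S \<noteq> y"
    proof
      assume "mode_label K v S = y"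
      thus False using mode_prop[OF K, of v S] kK gt by (metis not_le)
    qed
  qed
qed


lemma per_x:
  assumes K: "K > 0" and lab: "\<forall>h<H. v h < K" and ky: "k \<noteq> consensus_label H K v"
    and two: "\<forall>h<H. v h \<noteq> consensus_label H K v \<longrightarrow> v h = k"
    and odd: "odd nq" and nqH: "nq \<le> H"
  shows "measure_pmf.prob (pmf_of_set (expert_subsets H nq))
           {S. mode_label K v S \<noteq> consensus_label H K v}
         = F_HG (nq div 2) H (consensus_size H K v) nq"
proof -
  define y where "y = consensus_label H K v"
  define C where "C = {h \<in> {..<H}. v h = y}"
  define B where "B = {..<H} - C"
  define E where "E = expert_subsets H nq"
  define r where "r = nq div 2"
  have nc: "consensus_size H K v = card C"
    unfolding consensus_size_def C_def y_def votecount_def by simp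
  have fC: "finite C" "finite B" unfolding C_def B_def by auto
  have CB: "C \<union> B = {..<H}" "C \<inter> B = {}" unfolding C_def B_def by auto
  have cB: "card B = H - card C" unfolding B_def C_def by (subst card_Diff_subset) auto
  have fE: "finite E" unfolding E_def expert_subsets_def
    by (rule finite_subset[of _ "Pow {..<H}"]) auto
  have cE: "card E = H choose nq" unfolding E_def expert_subsets_def
    using n_subsets[of "{..<H}" nq] by simp
  have Ene: "E \<noteq> {}" using cE nqH by (metis card.empty zero_less_binomial_iff less_numeral_extra(3))
  have vcS: "votecount v S y = card (S \<inter> C)" if "S \<subseteq> {..<H}" for S
    unfolding votecount_def C_def using that by (intro arg_cong[where f=card]) auto
  have set_eq: "E \<inter> {S. mode_label K v S \<noteq> y}
      = (\<Union>j\<in>{0..r}. {S. S \<subseteq> C \<union> B \<and> card S = nq \<and> card (S \<inter> C) = j})"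
  proof (intro equalityI subsetI)
    fix S assume "S \<in> E \<inter> {S. mode_label K v S \<noteq> y}"
    hence S: "S \<subseteq> {..<H}" "card S = nq" "mode_label K v S \<noteq> y" unfolding E_def expert_subsets_def by auto
    have "votecount v S y \<le> r" using per_S[OF K lab ky[folded y_def] two[folded y_def] S(1,2) odd] S(3)
      unfolding r_def by simp
    thus "S \<in> (\<Union>j\<in>{0..r}. {S. S \<subseteq> C \<union> B \<and> card S = nq \<and> card (S \<inter> C) = j})"
      using S vcS CB by auto
  next
    fix S assume "S \<in> (\<Union>j\<in>{0..r}. {S. S \<subseteq> C \<union> B \<and> card S = nq \<and> card (S \<inter> C) = j})"
    hence S: "S \<subseteq> {..<H}" "card S = nq" "card (S \<inter> C) \<le> r" using CB by auto
    have "mode_label K v S \<noteq> y" using per_S[OF K lab ky[folded y_def] two[folded y_def] S(1,2) odd] S(3) vcS[OF S(1)]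
      unfolding r_def by simp
    thus "S \<in> E \<inter> {S. mode_label K v S \<noteq> y}" using S unfolding E_def expert_subsets_def by auto
  qed
  have "card (E \<inter> {S. mode_label K v S \<noteq> y})
      = (\<Sum>j\<in>{0..r}. card {S. S \<subseteq> C \<union> B \<and> card S = nq \<and> card (S \<inter> C) = j})"
    unfolding set_eq
  proof (rule card_UN_disjoint)
    show "finite {0..r}" by simp
    show "\<forall>i\<in>{0..r}. finite {S. S \<subseteq> C \<union> B \<and> card S = nq \<and> card (S \<inter> C) = i}"
      using fC by (auto intro: finite_subset[of _ "Pow (C \<union> B)"])
    show "\<forall>i\<in>{0..r}. \<forall>j\<in>{0..r}. i \<noteq> j \<longrightarrow>
      {S. S \<subseteq> C \<union> B \<and> card S = nq \<and> card (S \<inter> C) = i} \<inter>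
      {S. S \<subseteq> C \<union> B \<and> card S = nq \<and> card (S \<inter> C) = j} = {}" by auto
  qed
  also have "\<dots> = (\<Sum>j\<in>{0..r}. (card C choose j) * (card B choose (nq - j)))"
    using card_split_subsets[OF fC CB(2)] unfolding r_def by (intro sum.cong) auto
  finally have cnt: "card (E \<inter> {S. mode_label K v S \<noteq> y})
      = (\<Sum>j\<in>{0..r}. (card C choose j) * ((H - card C) choose (nq - j)))" using cB by simp
  have "measure_pmf.prob (pmf_of_set E) {S. mode_label K v S \<noteq> y}
      = real (card (E \<inter> {S. mode_label K v S \<noteq> y})) / real (card E)"
    using measure_pmf_of_set[OF Ene fE] by simp
  also have "\<dots> = F_HG r H (card C) nq"
    unfolding F_HG_def cnt cE by simp
  finally show ?thesis unfolding E_def y_def r_def nc .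
qed


theorem lemma2:
  fixes H K nq :: nat and p :: "'a pmf" and votes :: "'a \<Rightarrow> nat \<Rightarrow> nat"
  assumes K2: "K \<ge> 2"
    and labels: "\<forall>x h. h < H \<longrightarrow> votes x h < K"
    and majority: "\<forall>n\<le>H div 2.
          pmf (map_pmf (\<lambda>x. consensus_size H K (votes x)) p) n = 0"
    and two_labels: "\<forall>x\<in>set_pmf p. \<exists>k. k \<noteq> consensus_label H K (votes x) \<and>
          (\<forall>h<H. votes x h \<noteq> consensus_label H K (votes x) \<longrightarrow> votes x h = k)"
    and nq_odd: "odd nq" and nq_ge: "1 \<le> nq" and nq_le: "nq \<le> H"
  shows "Err H K nq p votes =
    (\<Sum>n\<le>H. pmf (map_pmf (\<lambda>x. consensus_size H K (votes x)) p) n * F_HG (nq div 2) H n nq)"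
proof -
  let ?nc = "\<lambda>x. consensus_size H K (votes x)"
  let ?F = "\<lambda>n. F_HG (nq div 2) H n nq"
  have K: "K > 0" using K2 by simp
  have "Err H K nq p votes = measure_pmf.expectation p (\<lambda>x. ?F (?nc x))"
    unfolding Err_def
  proof (rule integral_cong_AE)
    show "AE x in measure_pmf p. measure_pmf.prob (pmf_of_set (expert_subsets H nq))
           {S. mode_label K (votes x) S \<noteq> consensus_label H K (votes x)} = ?F (?nc x)"
    proof (rule AE_pmfI)
      fix x assume "x \<in> set_pmf p"
      then obtain k where k: "k \<noteq> consensus_label H K (votes x)"
        "\<forall>h<H. votes x h \<noteq> consensus_label H K (votes x) \<longrightarrow> votes x h = k"
        using two_labels by blast
      show "measure_pmf.prob (pmf_of_set (expert_subsets H nq))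
           {S. mode_label K (votes x) S \<noteq> consensus_label H K (votes x)} = ?F (?nc x)"
        using per_x[OF K _ k nq_odd nq_le] labels by blast
    qed
  qed auto
  also have "\<dots> = measure_pmf.expectation (map_pmf ?nc p) ?F" by simp
  also have "\<dots> = (\<Sum>n\<le>H. pmf (map_pmf ?nc p) n *\<^sub>R ?F n)"
  proof (rule integral_measure_pmf)
    show "finite {..H}" by simp
    fix n assume "n \<in> set_pmf (map_pmf ?nc p)"
    then obtain x where "n = ?nc x" by auto
    moreover have "?nc x \<le> H" unfolding consensus_size_def votecount_def
      using card_mono[of "{..<H}" "{h \<in> {..<H}. votes x h = consensus_label H K (votes x)}"] by auto
    ultimately show "n \<in> {..H}" by simp
  qed
  finally show ?thesis by simp
qed

end
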